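(* Let code 1 be a stabiliser code with disjointness $\delta_1$ and let code 2 be a stabiliser code encoding one logical qubit with disjointness $\delta_2$. Let the concatenated code be obtained by encoding each physical qubit of code 1 into a block of code 2, and let $\Delta$ be its disjointness. Then $\Delta\ge\delta_1\delta_2$.
   Context: Disjointness of a stabiliser code: for an integer $c\ge1$, a collection of representatives of a logical operator is $c$-disjoint if no physical qubit lies in the support of more than $c$ of them; the unnormalised $c$-disjointness $\Delta'_c$ is the largest integer such that every logical Pauli operator admits at least $\Delta'_c$ representatives forming a $c$-disjoint collection; the (normalised) $c$-disjointness is $\Delta_c=\Delta'_c/c$, and the disjointness is $\Delta=\max_{c\in\mathbb{Z}_+}\Delta_c$. *)

theory Defs
  imports "HOL-Library.Extended_Real"
begin

text \<open>Pauli operators on a finite set of qubits of type 'q, modulo phases,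
  in the binary symplectic representation: (x-part, z-part).
  I = (0,0), X = (1,0), Z = (0,1), Y = (1,1) on each qubit.\<close>
type_synonym 'q pauli = "('q \<Rightarrow> bool) \<times> ('q \<Rightarrow> bool)"

definition pid :: "'q pauli" where
  "pid = (\<lambda>_. False, \<lambda>_. False)"

definition pmult :: "'q pauli \<Rightarrow> 'q pauli \<Rightarrow> 'q pauli" where
  "pmult P Q = (\<lambda>q. fst P q \<noteq> fst Q q, \<lambda>q. snd P q \<noteq> snd Q q)"

definition commute :: "'q::finite pauli \<Rightarrow> 'q pauli \<Rightarrow> bool" where
  "commute P Q \<longleftrightarrow>
     even (card {q. (fst P q \<and> snd Q q) \<noteq> (snd P q \<and> fst Q q)})"

definition support :: "'q pauli \<Rightarrow> 'q set" where
  "support P = {q. fst P q \<or> snd P q}"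

text \<open>A stabiliser code on the qubits 'q, given by its stabiliser group
  modulo phases: a group of pairwise commuting Pauli operators.\<close>
definition stabiliser_code :: "'q::finite pauli set \<Rightarrow> bool" where
  "stabiliser_code S \<longleftrightarrow> pid \<in> S \<and> (\<forall>a\<in>S. \<forall>b\<in>S. pmult a b \<in> S)
     \<and> (\<forall>a\<in>S. \<forall>b\<in>S. commute a b)"

definition encodes_logical_qubits :: "'q::finite pauli set \<Rightarrow> nat \<Rightarrow> bool" where
  "encodes_logical_qubits S k \<longleftrightarrow> card S * 2 ^ k = 2 ^ card (UNIV :: 'q set)"

text \<open>Logical Pauli operators: the normaliser (= centraliser modulo phases).\<close>
definition normaliser :: "'q::finite pauli set \<Rightarrow> 'q pauli set" where
  "normaliser S = {P. \<forall>s\<in>S. commute P s}"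

definition representative :: "'q pauli set \<Rightarrow> 'q pauli \<Rightarrow> 'q pauli \<Rightarrow> bool" where
  "representative S P Q \<longleftrightarrow> pmult Q P \<in> S"

definition c_disjoint :: "nat \<Rightarrow> (nat \<Rightarrow> 'q pauli) \<Rightarrow> nat \<Rightarrow> bool" where
  "c_disjoint c R m \<longleftrightarrow> (\<forall>q. card {i. i < m \<and> q \<in> support (R i)} \<le> c)"

definition udisj :: "'q::finite pauli set \<Rightarrow> nat \<Rightarrow> enat" where
  "udisj S c = Sup {enat m | m. \<forall>P\<in>normaliser S. \<exists>R.
      (\<forall>i<m. representative S P (R i)) \<and> c_disjoint c R m}"

definition disj_c :: "'q::finite pauli set \<Rightarrow> nat \<Rightarrow> ereal" where
  "disj_c S c = ereal_of_enat (udisj S c) / ereal (real c)"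

definition disjointness :: "'q::finite pauli set \<Rightarrow> ereal" where
  "disjointness S = (SUP c\<in>{1..}. disj_c S c)"

text \<open>Encoding a Pauli operator on the qubits of code 1 into the blocks of
  code 2, using chosen logical operators xb (X-bar) and zb (Z-bar) of code 2.\<close>
definition encode :: "'b pauli \<Rightarrow> 'b pauli \<Rightarrow> 'a pauli \<Rightarrow> ('a \<times> 'b) pauli" where
  "encode xb zb P =
     (\<lambda>(q, j). (fst P q \<and> fst xb j) \<noteq> (snd P q \<and> fst zb j),
      \<lambda>(q, j). (fst P q \<and> snd xb j) \<noteq> (snd P q \<and> snd zb j))"

definition block :: "('a \<times> 'b) pauli \<Rightarrow> 'a \<Rightarrow> 'b pauli" where
  "block P q = (\<lambda>j. fst P (q, j), \<lambda>j. snd P (q, j))"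

definition concat_code ::
  "'a::finite pauli set \<Rightarrow> 'b::finite pauli set \<Rightarrow> 'b pauli \<Rightarrow> 'b pauli \<Rightarrow> ('a \<times> 'b) pauli set" where
  "concat_code S1 S2 xb zb =
     {pmult (encode xb zb s) b | s b. s \<in> S1 \<and> (\<forall>q. block b q \<in> S2)}"

end

theory Submission
  imports Defs "HOL-Library.Cardinality"
begin

definition sp :: "'q::finite pauli \<Rightarrow> 'q pauli \<Rightarrow> bool" where
  "sp P Q = odd (card {q. (fst P q \<and> snd Q q) \<noteq> (snd P q \<and> fst Q q)})"

lemma commute_sp: "commute P Q = (\<not> sp P Q)"
  by (simp add: commute_def sp_def)

lemma odd_card_xor:
  fixes A B :: "'q::finite \<Rightarrow> bool"
  shows "odd (card {q. A q \<noteq> B q}) = (odd (card {q. A q}) \<noteq> odd (card {q. B q}))"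
proof -
  let ?A = "{q. A q}" and ?B = "{q. B q}"
  have e: "{q. A q \<noteq> B q} = (?A - ?B) \<union> (?B - ?A)" by auto
  have c1: "card {q. A q \<noteq> B q} = card (?A - ?B) + card (?B - ?A)"
    unfolding e by (rule card_Un_disjoint) auto
  have c2: "card ?A = card (?A - ?B) + card (?A \<inter> ?B)"
    by (metis Diff_Diff_Int Diff_subset card_Diff_subset card_mono finite
        le_add_diff_inverse2 inf.cobounded1 add.commute)
  have c3: "card ?B = card (?B - ?A) + card (?A \<inter> ?B)"
    by (metis Diff_Diff_Int Diff_subset card_Diff_subset card_mono finite
        le_add_diff_inverse2 inf.cobounded2 add.commute Int_commute)
  show ?thesis using c1 c2 c3 by presburger
qed

lemma pmult_assoc: "pmult (pmult a b) c = pmult a (pmult b c)"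
  by (auto simp: pmult_def fun_eq_iff)
lemma pmult_comm: "pmult a b = pmult b a"
  by (auto simp: pmult_def fun_eq_iff)
lemma pmult_self[simp]: "pmult a a = pid"
  by (auto simp: pmult_def pid_def fun_eq_iff)
lemma pmult_pid[simp]: "pmult pid a = a" "pmult a pid = a"
  by (auto simp: pmult_def pid_def fun_eq_iff)
lemma pmult_cancel[simp]: "pmult a (pmult a b) = b" "pmult (pmult b a) a = b"
  by (cases a; cases b; auto simp: pmult_def fun_eq_iff)+

lemma sp_mult_left: "sp (pmult a b) c = (sp a c \<noteq> sp b c)"
proof -
  have "{q. (fst (pmult a b) q \<and> snd c q) \<noteq> (snd (pmult a b) q \<and> fst c q)}
      = {q. ((fst a q \<and> snd c q) \<noteq> (snd a q \<and> fst c q)) \<noteq> ((fst b q \<and> snd c q) \<noteq> (snd b q \<and> fst c q))}"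
    by (auto simp: pmult_def)
  then show ?thesis unfolding sp_def by (simp only: odd_card_xor)
qed

lemma sp_sym: "sp a b = sp b a"
proof -
  have "{q. (fst a q \<and> snd b q) \<noteq> (snd a q \<and> fst b q)} = {q. (fst b q \<and> snd a q) \<noteq> (snd b q \<and> fst a q)}"
    by auto
  then show ?thesis by (simp add: sp_def)
qed

lemma sp_mult_right: "sp c (pmult a b) = (sp c a \<noteq> sp c b)"
  by (metis sp_sym sp_mult_left)

lemma sp_self[simp]: "sp a a = False"
proof -
  have "{q. (fst a q \<and> snd a q) \<noteq> (snd a q \<and> fst a q)} = {}" by auto
  then show ?thesis by (simp only: sp_def) simp
qed

lemma sp_pid[simp]: "sp pid a = False" "sp a pid = False"
  by (simp_all add: sp_def pid_def)

lemma card_pauli: "card (UNIV :: 'q::finite pauli set) = 2 ^ CARD('q) * 2 ^ CARD('q)"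
  by (simp add: card_fun flip: UNIV_Times_UNIV card_cartesian_product)

lemma sum_flip_zero:
  fixes f :: "'x \<Rightarrow> int"
  assumes "finite A" "bij_betw h A A" "\<And>x. x \<in> A \<Longrightarrow> f (h x) = - f x"
  shows "sum f A = 0"
proof -
  have "sum f A = sum (\<lambda>x. f (h x)) A" using sum.reindex_bij_betw[OF assms(2), of f] by simp
  also have "\<dots> = sum (\<lambda>x. - f x) A" using assms(3) by (simp cong: sum.cong)
  also have "\<dots> = - sum f A" by (simp add: sum_negf)
  finally show ?thesis by simp
qed

lemma exists_anti:
  fixes t :: "'q::finite pauli"
  assumes "t \<noteq> pid"
  shows "\<exists>P0. sp P0 t"
proof -
  obtain q where q: "fst t q \<or> snd t q" using assms
    by (cases t) (auto simp: pid_def fun_eq_iff)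
  show ?thesis
  proof (cases "fst t q")
    case True
    have "{q'. (fst ((\<lambda>_. False, \<lambda>q'. q' = q)::'q pauli) q' \<and> snd t q') \<noteq> (snd ((\<lambda>_. False, \<lambda>q'. q' = q)::'q pauli) q' \<and> fst t q')} = {q}"
      using True by auto
    then have "sp ((\<lambda>_. False, \<lambda>q'. q' = q)::'q pauli) t" unfolding sp_def by simp
    then show ?thesis by blast
  next
    case False
    then have T: "snd t q" using q by simp
    have "{q'. (fst ((\<lambda>q'. q' = q, \<lambda>_. False)::'q pauli) q' \<and> snd t q') \<noteq> (snd ((\<lambda>q'. q' = q, \<lambda>_. False)::'q pauli) q' \<and> fst t q')} = {q}"
      using T by auto
    then have "sp ((\<lambda>q'. q' = q, \<lambda>_. False)::'q pauli) t" unfolding sp_def by simp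
    then show ?thesis by blast
  qed
qed

lemma bij_pmult: "(\<forall>a\<in>T. \<forall>b\<in>T. pmult a b \<in> T) \<Longrightarrow> t0 \<in> T \<Longrightarrow> bij_betw (\<lambda>t. pmult t t0) T T"
  by (rule bij_betw_byWitness[where f'="\<lambda>t. pmult t t0"]) auto

lemma perp_card:
  fixes T :: "'q::finite pauli set"
  assumes pT: "pid \<in> T" and cT: "\<forall>a\<in>T. \<forall>b\<in>T. pmult a b \<in> T"
  shows "card {D. \<forall>t\<in>T. \<not> sp D t} * card T = 2 ^ CARD('q) * 2 ^ CARD('q)"
proof -
  define C where "C = {D. \<forall>t\<in>T. \<not> sp D t}"
  define \<chi> where "\<chi> D t = (if sp D t then -1 else 1::int)" for D t :: "'q pauli"
  have i1: "(\<Sum>D\<in>UNIV. \<chi> D t) = (if t = pid then int (card (UNIV :: 'q pauli set)) else 0)" for t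
  proof (cases "t = pid")
    case True then show ?thesis by (simp add: \<chi>_def)
  next
    case False
    then obtain P0 where P0: "sp P0 t" using exists_anti by blast
    have "(\<Sum>D\<in>UNIV. \<chi> D t) = 0"
      by (rule sum_flip_zero[where h="\<lambda>D. pmult D P0"])
         (auto simp: bij_pmult \<chi>_def sp_mult_left P0)
    then show ?thesis using False by simp
  qed
  have i2: "(\<Sum>t\<in>T. \<chi> D t) = (if D \<in> C then int (card T) else 0)" for D
  proof (cases "D \<in> C")
    case True then show ?thesis by (simp add: \<chi>_def C_def)
  next
    case False
    then obtain t0 where t0: "t0 \<in> T" "sp D t0" by (auto simp: C_def)
    have "(\<Sum>t\<in>T. \<chi> D t) = 0"
      by (rule sum_flip_zero[where h="\<lambda>t. pmult t t0"])
         (auto simp: bij_pmult[OF cT t0(1)] \<chi>_def sp_mult_right t0 finite_subset)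
    then show ?thesis using False by simp
  qed
  have "(\<Sum>t\<in>T. \<Sum>D\<in>UNIV. \<chi> D t) = int (card (UNIV :: 'q pauli set))"
    using pT by (simp add: i1)
  moreover have "(\<Sum>D\<in>UNIV. \<Sum>t\<in>T. \<chi> D t) = int (card C * card T)"
    by (simp add: i2 sum.If_cases)
  moreover have "(\<Sum>t\<in>T. \<Sum>D\<in>UNIV. \<chi> D t) = (\<Sum>D\<in>UNIV. \<Sum>t\<in>T. \<chi> D t)"
    by (rule sum.swap)
  ultimately have "card C * card T = card (UNIV :: 'q pauli set)" by linarith
  then show ?thesis by (simp add: C_def card_fun)
qed

lemma pmult_left_comm: "pmult a (pmult b c) = pmult b (pmult a c)"
  by (auto simp: pmult_def fun_eq_iff)

lemmas pm_ac = pmult_assoc pmult_comm pmult_left_comm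

definition gen :: "'b pauli \<Rightarrow> 'b pauli \<Rightarrow> bool \<Rightarrow> bool \<Rightarrow> 'b pauli" where
  "gen xb zb a b = (\<lambda>j. (a \<and> fst xb j) \<noteq> (b \<and> fst zb j), \<lambda>j. (a \<and> snd xb j) \<noteq> (b \<and> snd zb j))"

lemma gen_alt: "gen xb zb a b = pmult (if a then xb else pid) (if b then zb else pid)"
  by (cases a; cases b; auto simp: gen_def pmult_def pid_def fun_eq_iff)

lemma gen_mult: "pmult (gen xb zb a b) (gen xb zb c d) = gen xb zb (a \<noteq> c) (b \<noteq> d)"
  by (auto simp: gen_def pmult_def fun_eq_iff)

lemma gen_FF[simp]: "gen xb zb False False = pid"
  by (simp add: gen_def pid_def)

lemma sp_gen: "sp (gen xb zb a b) P = ((a \<and> sp xb P) \<noteq> (b \<and> sp zb P))"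
  by (cases a; cases b; simp add: gen_alt sp_mult_left)

lemma sp_gen_r: "sp P (gen xb zb a b) = ((a \<and> sp P xb) \<noteq> (b \<and> sp P zb))"
  by (metis sp_sym sp_gen)

lemma normaliser_sp: "P \<in> normaliser S \<longleftrightarrow> (\<forall>s\<in>S. \<not> sp P s)"
  by (simp add: normaliser_def commute_sp)

lemma code2_class:
  fixes S2 :: "'b::finite pauli set"
  assumes st: "stabiliser_code S2" and enc: "encodes_logical_qubits S2 1"
    and xN: "xb \<in> normaliser S2" and zN: "zb \<in> normaliser S2" and sxz: "sp xb zb"
    and DN: "D \<in> normaliser S2" and Dx: "\<not> sp D xb" and Dz: "\<not> sp D zb"
  shows "D \<in> S2"
proof -
  have pS: "pid \<in> S2" and cS: "\<forall>a\<in>S2. \<forall>b\<in>S2. pmult a b \<in> S2"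
    and comS: "\<And>a b. a \<in> S2 \<Longrightarrow> b \<in> S2 \<Longrightarrow> \<not> sp a b"
    using st by (auto simp: stabiliser_code_def commute_sp)
  have sx: "\<And>s. s \<in> S2 \<Longrightarrow> \<not> sp s xb" using xN by (metis normaliser_sp sp_sym)
  have sz: "\<And>s. s \<in> S2 \<Longrightarrow> \<not> sp s zb" using zN by (metis normaliser_sp sp_sym)
  have szx: "sp zb xb" using sxz sp_sym by metis
  define f where "f = (\<lambda>(s, a, b). pmult s (gen xb zb a b))"
  define T where "T = f ` (S2 \<times> UNIV \<times> UNIV)"
  have pT: "pid \<in> T" unfolding T_def f_def
    by (rule image_eqI[where x="(pid, False, False)"]) (auto simp: pS)
  have cT: "\<forall>a\<in>T. \<forall>b\<in>T. pmult a b \<in> T"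
  proof (intro ballI)
    fix x y assume "x \<in> T" "y \<in> T"
    then obtain s a b s' c d where x: "x = pmult s (gen xb zb a b)" "s \<in> S2"
      and y: "y = pmult s' (gen xb zb c d)" "s' \<in> S2"
      by (auto simp: T_def f_def)
    have "pmult x y = pmult (pmult s s') (gen xb zb (a \<noteq> c) (b \<noteq> d))"
      unfolding x y gen_mult[symmetric] by (simp add: pm_ac)
    then show "pmult x y \<in> T" using x y cS unfolding T_def f_def
      by (auto intro!: image_eqI[where x="(pmult s s', a \<noteq> c, b \<noteq> d)"])
  qed
  have inj: "inj_on f (S2 \<times> UNIV \<times> UNIV)"
  proof (rule inj_onI)
    fix u v assume u: "u \<in> S2 \<times> UNIV \<times> UNIV" and v: "v \<in> S2 \<times> UNIV \<times> UNIV" and e: "f u = f v"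
    obtain s a b where us: "u = (s, a, b)" by (cases u) auto
    obtain s' c d where vs: "v = (s', c, d)" by (cases v) auto
    have e2: "pmult s (gen xb zb a b) = pmult s' (gen xb zb c d)" using e by (simp add: f_def us vs)
    have "pmult s s' = pmult (pmult s (gen xb zb a b)) (pmult s' (gen xb zb a b))"
      by (simp add: pm_ac)
    also have "\<dots> = pmult (pmult s' (gen xb zb c d)) (pmult s' (gen xb zb a b))" by (simp add: e2)
    also have "\<dots> = gen xb zb (c \<noteq> a) (d \<noteq> b)" by (simp add: pm_ac gen_mult) (cases a; cases b; cases c; cases d; simp)
    finally have ge: "pmult s s' = gen xb zb (c \<noteq> a) (d \<noteq> b)" .
    have "s \<in> S2" "s' \<in> S2" using u v us vs by auto
    then have "pmult s s' \<in> S2" using cS by blast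
    then have g: "gen xb zb (c \<noteq> a) (d \<noteq> b) \<in> S2" using ge by simp
    have "\<not> sp (gen xb zb (c \<noteq> a) (d \<noteq> b)) xb" using sx[OF g] .
    then have 1: "d = b" by (simp add: sp_gen szx)
    have "\<not> sp (gen xb zb (c \<noteq> a) (d \<noteq> b)) zb" using sz[OF g] .
    then have 2: "c = a" by (simp add: sp_gen sxz)
    have "pmult (pmult s (gen xb zb a b)) (gen xb zb a b) = pmult (pmult s' (gen xb zb a b)) (gen xb zb a b)"
      using e2 1 2 by simp
    then have "s = s'" by simp
    then show "u = v" using us vs 1 2 by simp
  qed
  have cardT: "card T = card S2 * 4"
    unfolding T_def using card_image[OF inj] by (simp add: card_cartesian_product)
  define C where "C = {D. \<forall>t\<in>T. \<not> sp D t}"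
  have pc: "card C * card T = 2 ^ CARD('b) * 2 ^ CARD('b)"
    unfolding C_def by (rule perp_card[OF pT cT])
  have e1: "card S2 * 2 = 2 ^ CARD('b)" using enc by (simp add: encodes_logical_qubits_def)
  have pos: "card S2 > 0" using pS by (metis card_gt_0_iff empty_iff finite)
  have "card C * card T = (card S2 * 2) * (card S2 * 2)" using pc unfolding e1 .
  then have "4 * (card C * card S2) = 4 * (card S2 * card S2)" unfolding cardT
    by (simp add: algebra_simps)
  then have "card C * card S2 = card S2 * card S2" by simp
  then have cc: "card C = card S2" using pos by auto
  have sub: "S2 \<subseteq> C"
  proof
    fix s assume s: "s \<in> S2"
    show "s \<in> C" unfolding C_def T_def f_def
      using s by (auto simp: sp_mult_right sp_gen_r comS sx sz)
  qed
  have "S2 = C" by (rule card_subset_eq) (use sub cc in auto)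
  moreover have "D \<in> C" unfolding C_def T_def f_def
    using DN Dx Dz by (auto simp: sp_mult_right sp_gen_r normaliser_sp)
  ultimately show ?thesis by simp
qed

lemma odd_sum_card:
  fixes g :: "'x \<Rightarrow> nat"
  assumes "finite A"
  shows "odd (sum g A) = odd (card {q\<in>A. odd (g q)})"
  using assms
proof (induction A rule: finite_induct)
  case empty then show ?case by simp
next
  case (insert x F)
  have e: "{q\<in>insert x F. odd (g q)} = (if odd (g x) then insert x {q\<in>F. odd (g q)} else {q\<in>F. odd (g q)})"
    by auto
  have "finite {q\<in>F. odd (g q)}" using insert by simp
  moreover have "x \<notin> {q\<in>F. odd (g q)}" using insert by simp
  ultimately show ?case using insert e by auto
qed

lemma sp_block:
  fixes P Q :: "('a::finite \<times> 'b::finite) pauli"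
  shows "sp P Q = odd (card {q. sp (block P q) (block Q q)})"
proof -
  define F where "F x = ((fst P x \<and> snd Q x) \<noteq> (snd P x \<and> fst Q x))" for x
  have "{x. F x} = Sigma UNIV (\<lambda>q. {j. F (q, j)})" by auto
  then have "card {x. F x} = (\<Sum>q\<in>UNIV. card {j. F (q, j)})"
    by simp
  moreover have "sp (block P q) (block Q q) = odd (card {j. F (q, j)})" for q
    by (simp add: sp_def block_def F_def)
  moreover have "sp P Q = odd (card {x. F x})" by (simp add: sp_def F_def)
  ultimately show ?thesis
    using odd_sum_card[of UNIV "\<lambda>q. card {j. F (q, j)}"] by simp
qed

lemma block_pmult: "block (pmult a b) q = pmult (block a q) (block b q)"
  by (simp add: block_def pmult_def)

lemma block_encode: "block (encode xb zb L) q = gen xb zb (fst L q) (snd L q)"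
  by (simp add: block_def encode_def gen_def)

lemma block_pid[simp]: "block pid q = pid"
  by (simp add: block_def pid_def)

lemma encode_pid[simp]: "encode xb zb pid = pid"
  by (simp add: encode_def pid_def fun_eq_iff)

definition lift :: "'a \<Rightarrow> 'b pauli \<Rightarrow> ('a \<times> 'b) pauli" where
  "lift q s = (\<lambda>(q', j). q' = q \<and> fst s j, \<lambda>(q', j). q' = q \<and> snd s j)"

lemma block_lift: "block (lift q s) q' = (if q' = q then s else pid)"
  by (auto simp: block_def lift_def pid_def)

lemma sp_lift:
  fixes P :: "('a::finite \<times> 'b::finite) pauli"
  shows "sp P (lift q s) = sp (block P q) s"
proof -
  have "{q'. sp (block P q') (block (lift q s) q')} = (if sp (block P q) s then {q} else {})"
    by (auto simp: block_lift split: if_splits)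
  then show ?thesis by (simp add: sp_block)
qed

lemma sp_gen_gen:
  assumes "sp xb zb"
  shows "sp (gen xb zb a b) (gen xb zb c d) = ((a \<and> d) \<noteq> (b \<and> c))"
proof -
  have "sp zb xb" using assms sp_sym by metis
  then show ?thesis using assms by (auto simp: sp_gen sp_gen_r)
qed

lemma sp_encode:
  assumes "sp xb zb"
  shows "sp (encode xb zb L) (encode xb zb M) = sp L M"
  unfolding sp_block[of "encode xb zb L"] block_encode sp_gen_gen[OF assms] by (simp add: sp_def)

lemma main_comb:
  fixes S1 :: "'a::finite pauli set" and S2 :: "'b::finite pauli set"
    and xb zb :: "'b pauli"
  assumes st1: "stabiliser_code S1"
    and st2: "stabiliser_code S2"
    and enc: "encodes_logical_qubits S2 1"
    and xN: "xb \<in> normaliser S2" and zN: "zb \<in> normaliser S2"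
    and nc: "\<not> commute xb zb"
    and h1: "\<forall>P\<in>normaliser S1. \<exists>R. (\<forall>i<m1. representative S1 P (R i)) \<and> c_disjoint c1 R m1"
    and h2: "\<forall>P\<in>normaliser S2. \<exists>R. (\<forall>i<m2. representative S2 P (R i)) \<and> c_disjoint c2 R m2"
  shows "\<forall>P\<in>normaliser (concat_code S1 S2 xb zb). \<exists>R.
     (\<forall>i<m1*m2. representative (concat_code S1 S2 xb zb) P (R i)) \<and> c_disjoint (c1*c2) R (m1*m2)"
proof
  fix P assume PN: "P \<in> normaliser (concat_code S1 S2 xb zb)"
  let ?K = "concat_code S1 S2 xb zb"
  have sxz: "sp xb zb" using nc by (simp add: commute_sp)
  have szx: "sp zb xb" using sxz sp_sym by metis
  have pS1: "pid \<in> S1" and cS1: "\<forall>a\<in>S1. \<forall>b\<in>S1. pmult a b \<in> S1"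
    using st1 by (auto simp: stabiliser_code_def)
  have pS2: "pid \<in> S2" and cS2: "\<forall>a\<in>S2. \<forall>b\<in>S2. pmult a b \<in> S2"
    using st2 by (auto simp: stabiliser_code_def)
  have sx: "\<And>s. s \<in> S2 \<Longrightarrow> \<not> sp s xb" using xN by (metis normaliser_sp sp_sym)
  have sz: "\<And>s. s \<in> S2 \<Longrightarrow> \<not> sp s zb" using zN by (metis normaliser_sp sp_sym)
  have liftK: "lift q s \<in> ?K" if "s \<in> S2" for q s
    unfolding concat_code_def
    by (rule CollectI, rule exI[where x=pid], rule exI[where x="lift q s"])
       (simp add: pS1 block_lift pS2 that)
  have encK: "encode xb zb s \<in> ?K" if "s \<in> S1" for s
    unfolding concat_code_def
    by (rule CollectI, rule exI[where x=s], rule exI[where x=pid]) (simp add: pS2 that)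
  have PK: "\<And>t. t \<in> ?K \<Longrightarrow> \<not> sp P t" using PN by (simp add: normaliser_sp)
  have BN: "block P q \<in> normaliser S2" for q
    unfolding normaliser_sp using PK liftK sp_lift by metis
  have gN: "gen xb zb a b \<in> normaliser S2" for a b
    unfolding normaliser_sp using xN zN by (simp add: sp_gen normaliser_sp)
  define L :: "'a pauli" where "L = (\<lambda>q. sp (block P q) zb, \<lambda>q. sp (block P q) xb)"
  define Dq where "Dq q = pmult (block P q) (gen xb zb (fst L q) (snd L q))" for q
  have DqS: "Dq q \<in> S2" for q
  proof (rule code2_class[OF st2 enc xN zN sxz])
    show "Dq q \<in> normaliser S2" using BN gN unfolding Dq_def normaliser_sp
      by (simp add: sp_mult_left)
    show "\<not> sp (Dq q) xb" unfolding Dq_def L_def by (simp add: sp_mult_left sp_gen szx)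
    show "\<not> sp (Dq q) zb" unfolding Dq_def L_def by (simp add: sp_mult_left sp_gen sxz)
  qed
  define Dp where "Dp = pmult P (encode xb zb L)"
  have bDp: "block Dp q = Dq q" for q
    by (simp add: Dp_def Dq_def block_pmult block_encode)
  have PDp: "P = pmult Dp (encode xb zb L)" by (simp add: Dp_def)
  have LN: "L \<in> normaliser S1"
    unfolding normaliser_sp
  proof
    fix s assume s: "s \<in> S1"
    have "{q. sp (block Dp q) (block (encode xb zb s) q)} = {}"
      using DqS sx sz by (auto simp: bDp block_encode sp_gen_r)
    then have "\<not> sp Dp (encode xb zb s)" by (simp add: sp_block)
    moreover have "\<not> sp P (encode xb zb s)" using PK encK s by blast
    ultimately show "\<not> sp L s"
      unfolding PDp by (simp add: sp_mult_left sp_encode[OF sxz])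
  qed
  obtain R1 where R1: "\<forall>i<m1. representative S1 L (R1 i)" "c_disjoint c1 R1 m1"
    using h1 LN by blast
  have "\<forall>ab. \<exists>R. (\<forall>j<m2. representative S2 (gen xb zb (fst ab) (snd ab)) (R j)) \<and> c_disjoint c2 R m2"
    using h2 gN by blast
  then obtain R2 where R2: "\<And>ab. (\<forall>j<m2. representative S2 (gen xb zb (fst ab) (snd ab)) (R2 ab j)) \<and> c_disjoint c2 (R2 ab) m2"
    by metis
  define W where "W a b j = (if a \<or> b then R2 (a, b) j else pid)" for a b j
  have Wrep: "pmult (W a b j) (gen xb zb a b) \<in> S2" if "j < m2" for a b j
    using R2[of "(a, b)"] that pS2 by (auto simp: W_def representative_def)
  define R where "R k = ((\<lambda>(q, t). fst (W (fst (R1 (k div m2)) q) (snd (R1 (k div m2)) q) (k mod m2)) t),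
                         (\<lambda>(q, t). snd (W (fst (R1 (k div m2)) q) (snd (R1 (k div m2)) q) (k mod m2)) t))" for k
  have bR: "block (R k) q = W (fst (R1 (k div m2)) q) (snd (R1 (k div m2)) q) (k mod m2)" for k q
    by (simp add: block_def R_def)
  show "\<exists>R. (\<forall>i<m1*m2. representative ?K P (R i)) \<and> c_disjoint (c1*c2) R (m1*m2)"
  proof (intro exI conjI allI impI)
    fix k assume k: "k < m1 * m2"
    define i where "i = k div m2"
    define j where "j = k mod m2"
    have m2p: "m2 > 0" using k by (cases m2) auto
    have i: "i < m1" unfolding i_def using k by (simp add: less_mult_imp_div_less)
    have j: "j < m2" unfolding j_def using m2p by simp
    define s where "s = pmult (R1 i) L"
    have s: "s \<in> S1" using R1(1) i by (simp add: s_def representative_def)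
    define b where "b = pmult (pmult (R k) P) (encode xb zb s)"
    have bb: "block b q \<in> S2" for q
    proof -
      have e1: "block P q = pmult (Dq q) (gen xb zb (fst L q) (snd L q))"
        by (simp add: Dq_def pmult_assoc)
      have e2: "gen xb zb (fst s q) (snd s q) = pmult (gen xb zb (fst (R1 i) q) (snd (R1 i) q)) (gen xb zb (fst L q) (snd L q))"
        unfolding gen_mult by (simp add: s_def pmult_def)
      have "block b q = pmult (pmult (W (fst (R1 i) q) (snd (R1 i) q) j) (gen xb zb (fst (R1 i) q) (snd (R1 i) q))) (Dq q)"
        unfolding b_def block_pmult block_encode bR e1 e2 i_def[symmetric] j_def[symmetric]
        by (simp add: pm_ac)
      then show ?thesis using Wrep[OF j] DqS cS2 by simp
    qed
    have "pmult (R k) P = pmult (encode xb zb s) b" by (simp add: b_def pm_ac)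
    then show "representative ?K P (R k)"
      unfolding representative_def concat_code_def using s bb by blast
  next
    show "c_disjoint (c1 * c2) R (m1 * m2)"
      unfolding c_disjoint_def
    proof
      fix x :: "'a \<times> 'b"
      obtain q t where x: "x = (q, t)" by (cases x)
      define I where "I = {i. i < m1 \<and> q \<in> support (R1 i)}"
      define J where "J i = {j. j < m2 \<and> t \<in> support (R2 (fst (R1 i) q, snd (R1 i) q) j)}" for i
      have cI: "card I \<le> c1" using R1(2) unfolding c_disjoint_def I_def by blast
      have cJ: "card (J i) \<le> c2" for i
        using R2[of "(fst (R1 i) q, snd (R1 i) q)"] unfolding c_disjoint_def J_def by blast
      have sub: "{k. k < m1 * m2 \<and> x \<in> support (R k)} \<subseteq> (\<lambda>(i, j). i * m2 + j) ` Sigma I J"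
      proof
        fix k assume "k \<in> {k. k < m1 * m2 \<and> x \<in> support (R k)}"
        then have k: "k < m1 * m2" and xs: "x \<in> support (R k)" by auto
        have m2p: "m2 > 0" using k by (cases m2) auto
        have i: "k div m2 < m1" using k by (simp add: less_mult_imp_div_less)
        have j: "k mod m2 < m2" using m2p by simp
        have ts: "t \<in> support (W (fst (R1 (k div m2)) q) (snd (R1 (k div m2)) q) (k mod m2))"
          using xs unfolding x support_def by (simp add: R_def)
        then have ab: "fst (R1 (k div m2)) q \<or> snd (R1 (k div m2)) q"
          by (auto simp: W_def support_def pid_def split: if_splits)
        then have "k div m2 \<in> I" using i by (simp add: I_def support_def)
        moreover have "k mod m2 \<in> J (k div m2)" using ts ab j by (simp add: J_def W_def)
        ultimately show "k \<in> (\<lambda>(i, j). i * m2 + j) ` Sigma I J"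
          by (auto intro!: image_eqI[where x="(k div m2, k mod m2)"])
      qed
      have fI: "finite I" by (simp add: I_def)
      have fJ: "finite (J i)" for i by (simp add: J_def)
      have "card {k. k < m1 * m2 \<and> x \<in> support (R k)} \<le> card ((\<lambda>(i, j). i * m2 + j) ` Sigma I J)"
        by (rule card_mono[OF _ sub]) (simp add: fI fJ)
      also have "\<dots> \<le> card (Sigma I J)" by (rule card_image_le) (simp add: fI fJ)
      also have "\<dots> = (\<Sum>i\<in>I. card (J i))" using fI fJ by simp
      also have "\<dots> \<le> (\<Sum>i\<in>I. c2)" by (rule sum_mono) (rule cJ)
      also have "\<dots> = card I * c2" by simp
      also have "\<dots> \<le> c1 * c2" using cI by simp
      finally show "card {k. k < m1 * m2 \<and> x \<in> support (R k)} \<le> c1 * c2" .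
    qed
  qed
qed

lemma prod_le:
  fixes f :: "'i \<Rightarrow> ereal" and g :: "'j \<Rightarrow> ereal"
  assumes I: "I \<noteq> {}" and J: "J \<noteq> {}" and f0: "\<And>i. i \<in> I \<Longrightarrow> 0 \<le> f i"
    and g0: "\<And>j. j \<in> J \<Longrightarrow> 0 \<le> g j"
    and le: "\<And>i j. i \<in> I \<Longrightarrow> j \<in> J \<Longrightarrow> f i * g j \<le> M"
  shows "(SUP i\<in>I. f i) * (SUP j\<in>J. g j) \<le> M"
proof -
  obtain j0 where j0: "j0 \<in> J" using J by blast
  have G0: "0 \<le> (SUP j\<in>J. g j)" using g0[OF j0] SUP_upper[OF j0, of g] by (rule order.trans)
  have "(SUP i\<in>I. f i) * (SUP j\<in>J. g j) = (SUP j\<in>J. g j) * (SUP i\<in>I. f i)" by (simp add: mult.commute)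
  also have "\<dots> = (SUP i\<in>I. (SUP j\<in>J. g j) * f i)"
    by (rule SUP_ereal_mult_left[symmetric]) (use I f0 G0 in auto)
  also have "\<dots> \<le> M"
  proof (rule SUP_least)
    fix i assume i: "i \<in> I"
    have "(SUP j\<in>J. g j) * f i = f i * (SUP j\<in>J. g j)" by (simp add: mult.commute)
    also have "\<dots> = (SUP j\<in>J. f i * g j)"
      by (rule SUP_ereal_mult_left[symmetric]) (use J g0 f0 i in auto)
    also have "\<dots> \<le> M" by (rule SUP_least) (use le i in auto)
    finally show "(SUP j\<in>J. g j) * f i \<le> M" .
  qed
  finally show ?thesis .
qed

lemma disj_c_SUP:
  fixes S :: "'q::finite pauli set"
  assumes c: "c \<ge> 1"
  shows "disj_c S c = (SUP m\<in>{m. \<forall>P\<in>normaliser S. \<exists>R. (\<forall>i<m. representative S P (R i)) \<and> c_disjoint c R m}.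
            ereal (real m / real c))"
proof -
  define M where "M = {m. \<forall>P\<in>normaliser S. \<exists>R. (\<forall>i<m. representative S P (R i)) \<and> c_disjoint c R m}"
  have M0: "0 \<in> M" by (simp add: M_def c_disjoint_def)
  have u: "udisj S c = (SUP m\<in>M. enat m)"
    unfolding udisj_def M_def by (simp add: image_def setcompr_eq_image)
  have "ereal_of_enat (udisj S c) = (SUP m\<in>M. ereal (real m))"
    unfolding u using M0 by (subst ereal_of_enat_SUP) auto
  moreover have "x / ereal (real c) = x * ereal (1 / real c)" for x
    using c by (simp add: divide_ereal_def inverse_eq_divide)
  ultimately have "disj_c S c = (SUP m\<in>M. ereal (real m)) * ereal (1 / real c)"
    by (simp add: disj_c_def)
  also have "\<dots> = (SUP m\<in>M. ereal (real m) * ereal (1 / real c))"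
    by (rule Sup_ereal_mult_right') (use M0 in auto)
  also have "\<dots> = (SUP m\<in>M. ereal (real m / real c))" by simp
  finally show ?thesis by (simp add: M_def)
qed

definition goodm :: "'q::finite pauli set \<Rightarrow> nat \<Rightarrow> nat set" where
  "goodm S c = {m. \<forall>P\<in>normaliser S. \<exists>R. (\<forall>i<m. representative S P (R i)) \<and> c_disjoint c R m}"

lemma goodm0: "0 \<in> goodm S c" by (simp add: goodm_def c_disjoint_def)

lemma dc: "c \<ge> 1 \<Longrightarrow> disj_c S c = (SUP m\<in>goodm S c. ereal (real m / real c))"
  unfolding goodm_def by (rule disj_c_SUP)

lemma dc0: "c \<ge> 1 \<Longrightarrow> 0 \<le> disj_c S c"
  unfolding dc by (rule order.trans[OF _ SUP_upper[OF goodm0]]) simp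

theorem lemma5:
  fixes S1 :: "'a::finite pauli set" and S2 :: "'b::finite pauli set"
    and xb zb :: "'b pauli"
  assumes "stabiliser_code S1"
    and "stabiliser_code S2"
    and "encodes_logical_qubits S2 1"
    and "xb \<in> normaliser S2" and "zb \<in> normaliser S2"
    and "\<not> commute xb zb"
  shows "disjointness (concat_code S1 S2 xb zb) \<ge> disjointness S1 * disjointness S2"
proof -
  let ?K = "concat_code S1 S2 xb zb"
  have key: "disj_c S1 c1 * disj_c S2 c2 \<le> disjointness ?K" if c1: "c1 \<ge> 1" and c2: "c2 \<ge> 1" for c1 c2
    unfolding dc[OF c1] dc[OF c2]
  proof (rule prod_le)
    fix m1 m2 assume m1: "m1 \<in> goodm S1 c1" and m2: "m2 \<in> goodm S2 c2"
    have mm: "m1 * m2 \<in> goodm ?K (c1 * c2)"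
      using main_comb[OF assms m1[unfolded goodm_def, simplified] m2[unfolded goodm_def, simplified]]
      by (simp add: goodm_def)
    have cc: "c1 * c2 \<ge> 1" using c1 c2 by simp
    have "ereal (real m1 / real c1) * ereal (real m2 / real c2) = ereal (real (m1 * m2) / real (c1 * c2))"
      by simp
    also have "\<dots> \<le> disj_c ?K (c1 * c2)"
      unfolding dc[OF cc] by (rule SUP_upper[OF mm])
    also have "\<dots> \<le> disjointness ?K"
      unfolding disjointness_def by (rule SUP_upper) (use cc in simp)
    finally show "ereal (real m1 / real c1) * ereal (real m2 / real c2) \<le> disjointness ?K" .
  qed (use goodm0 in auto)
  show ?thesis
    unfolding disjointness_def[of S1] disjointness_def[of S2]
    by (rule prod_le) (auto intro: dc0 key)
qed

end
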